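(* Let $d\ge1$, $m\ge1$, $\nu\ge2$ be integers, $\Lambda\subset\mathbb Z^d$ finite, containing $\mathbf 0$ and symmetric, $\boldsymbol\Sigma=\{\Sigma_{\mathbf k}\}_{\mathbf k\in\Lambda}$ with $\Sigma_{-\mathbf k}=\Sigma_{\mathbf k}^*\in\mathbb C^{m\times m}$, and $\Psi$ an $m\times m$ matrix-valued function on $\mathbb T^d$ with rational entries which is bounded and coercive. Then the dual function $$J_\nu(\mathbf Q)=\langle\mathbf Q,\boldsymbol\Sigma\rangle+\frac{\nu}{\nu-1}\int_{\mathbb T^d}\operatorname{tr}\Big\{\big[\Psi^{-1}(\Psi^{-1}+\tfrac1\nu Q)^{-1}\big]^{\nu-1}\Big\}\,\mathrm d\mu$$ is lower-semicontinuous on $\mathscr L_+$.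
   Context: $\mathbb T^d=(-\pi,\pi]^d$, $\mathrm d\mu=(2\pi)^{-d}\prod_j\mathrm d\theta_j$; bounded and coercive means $aI_m\le\Psi\le bI_m$ on $\mathbb T^d$ for some $b>a>0$. For $\mathbf Q=\{Q_{\mathbf k}\}_{\mathbf k\in\Lambda}$, $Q_{\mathbf k}\in\mathbb C^{m\times m}$, $Q_{-\mathbf k}=Q_{\mathbf k}^*$: $Q(e^{i\boldsymbol\theta})=\sum_{\mathbf k}Q_{\mathbf k}e^{-i\langle\mathbf k,\boldsymbol\theta\rangle}$, $\langle\mathbf Q,\boldsymbol\Sigma\rangle=\sum_{\mathbf k}\operatorname{tr}(Q_{\mathbf k}\Sigma_{\mathbf k}^* )$. $\mathscr L_+=\{\mathbf Q:\nu\Psi^{-1}+Q\ge0\text{ on }\mathbb T^d,\ \text{not identically zero}\}$, a subset of the finite-dimensional real vector space of such $\mathbf Q$. Where $\Psi^{-1}+\frac1\nu Q$ is singular somewhere, the integral is over the complement of the Lebesgue-null set where $\det(\nu\Psi^{-1}+Q)=0$, and $J_\nu$ may take the value $+\infty$. *)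

theory Defs
  imports "HOL-Analysis.Analysis"
begin

definition cadj :: "complex^'n^'m \<Rightarrow> complex^'m^'n" where
  "cadj A = (\<chi> i j. cnj (A $ j $ i))"

definition hermitian :: "complex^'n^'n \<Rightarrow> bool" where
  "hermitian A \<longleftrightarrow> cadj A = A"

definition psd :: "complex^'n^'n \<Rightarrow> bool" where
  "psd A \<longleftrightarrow> hermitian A \<and>
     (\<forall>x::complex^'n. 0 \<le> Re (\<Sum>i\<in>UNIV. \<Sum>j\<in>UNIV. cnj (x $ i) * A $ i $ j * x $ j))"

definition loewner_le :: "complex^'n^'n \<Rightarrow> complex^'n^'n \<Rightarrow> bool" where
  "loewner_le A B \<longleftrightarrow> psd (B - A)"

fun mpow :: "complex^'n^'n \<Rightarrow> nat \<Rightarrow> complex^'n^'n" where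
  "mpow A 0 = mat 1"
| "mpow A (Suc n) = A ** mpow A n"

definition kdot :: "int^'d \<Rightarrow> real^'d \<Rightarrow> real" where
  "kdot k \<theta> = (\<Sum>j\<in>UNIV. real_of_int (k $ j) * \<theta> $ j)"

definition torus :: "(real^'d) set" where
  "torus = {\<theta>. \<forall>j. - pi < \<theta> $ j \<and> \<theta> $ j \<le> pi}"

definition trig_poly :: "(real^'d \<Rightarrow> complex) \<Rightarrow> bool" where
  "trig_poly p \<longleftrightarrow> (\<exists>(F::(int^'d) set) c. finite F \<and>
      (\<forall>\<theta>. p \<theta> = (\<Sum>k\<in>F. c k * exp (\<i> * complex_of_real (kdot k \<theta>)))))"

(* a scalar function on T^d is rational: a ratio p/q of polynomials in
   e^{i theta_j} (equivalently of trigonometric polynomials), q not identically zero *)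
definition rational_on_torus :: "(real^'d \<Rightarrow> complex) \<Rightarrow> bool" where
  "rational_on_torus f \<longleftrightarrow> (\<exists>p q. trig_poly p \<and> trig_poly q \<and>
      (\<exists>\<theta>\<in>torus. q \<theta> \<noteq> 0) \<and>
      (\<forall>\<theta>\<in>torus. q \<theta> \<noteq> 0 \<longrightarrow> f \<theta> = p \<theta> / q \<theta>))"

definition rational_matrix_fun :: "(real^'d \<Rightarrow> complex^'m^'m) \<Rightarrow> bool" where
  "rational_matrix_fun \<Psi> \<longleftrightarrow> (\<forall>i j. rational_on_torus (\<lambda>\<theta>. \<Psi> \<theta> $ i $ j))"

definition bounded_coercive :: "(real^'d \<Rightarrow> complex^'m^'m) \<Rightarrow> bool" where
  "bounded_coercive \<Psi> \<longleftrightarrow> (\<exists>a b::real. 0 < a \<and> a < b \<and>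
      (\<forall>\<theta>\<in>torus. loewner_le (a *\<^sub>R mat 1) (\<Psi> \<theta>) \<and> loewner_le (\<Psi> \<theta>) (b *\<^sub>R mat 1)))"

definition cscale :: "complex \<Rightarrow> complex^'n^'m \<Rightarrow> complex^'n^'m" where
  "cscale c A = (\<chi> i j. c * A $ i $ j)"

definition Qfun :: "(int^'d) set \<Rightarrow> (int^'d \<Rightarrow> complex^'m^'m) \<Rightarrow> real^'d \<Rightarrow> complex^'m^'m" where
  "Qfun \<Lambda> Q \<theta> = (\<Sum>k\<in>\<Lambda>. cscale (exp (- \<i> * complex_of_real (kdot k \<theta>))) (Q k))"

definition herm_family :: "(int^'d) set \<Rightarrow> (int^'d \<Rightarrow> complex^'m^'m) \<Rightarrow> bool" where
  "herm_family \<Lambda> Q \<longleftrightarrow> (\<forall>k\<in>\<Lambda>. Q (- k) = cadj (Q k))"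

(* <Q, Sigma> = sum_k tr(Q_k Sigma_k^* ) (real for Hermitian families) *)
definition pairing :: "(int^'d) set \<Rightarrow> (int^'d \<Rightarrow> complex^'m^'m) \<Rightarrow> (int^'d \<Rightarrow> complex^'m^'m) \<Rightarrow> real" where
  "pairing \<Lambda> Q \<Sigma> = Re (\<Sum>k\<in>\<Lambda>. trace (Q k ** cadj (\<Sigma> k)))"

definition Lplus :: "nat \<Rightarrow> (int^'d) set \<Rightarrow> (real^'d \<Rightarrow> complex^'m^'m) \<Rightarrow> (int^'d \<Rightarrow> complex^'m^'m) set" where
  "Lplus \<nu> \<Lambda> \<Psi> = {Q. herm_family \<Lambda> Q \<and>
      (\<forall>\<theta>\<in>torus. psd (real \<nu> *\<^sub>R matrix_inv (\<Psi> \<theta>) + Qfun \<Lambda> Q \<theta>)) \<and>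
      (\<exists>\<theta>\<in>torus. real \<nu> *\<^sub>R matrix_inv (\<Psi> \<theta>) + Qfun \<Lambda> Q \<theta> \<noteq> 0)}"

(* the integrand, set to 0 on the null set where Psi^{-1} + Q/nu is singular;
   includes the normalisation (2 pi)^{-d} of d mu *)
definition Jintegrand :: "nat \<Rightarrow> (int^'d) set \<Rightarrow> (real^'d \<Rightarrow> complex^'m^'m) \<Rightarrow> (int^'d \<Rightarrow> complex^'m^'m) \<Rightarrow> real^'d \<Rightarrow> real" where
  "Jintegrand \<nu> \<Lambda> \<Psi> Q \<theta> =
     (let M = matrix_inv (\<Psi> \<theta>) + (1 / real \<nu>) *\<^sub>R Qfun \<Lambda> Q \<theta> in
      if det M = 0 then 0
      else (1 / (2 * pi) ^ CARD('d)) *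
           Re (trace (mpow (matrix_inv (\<Psi> \<theta>) ** matrix_inv M) (\<nu> - 1))))"

definition Jnu :: "nat \<Rightarrow> (int^'d) set \<Rightarrow> (int^'d \<Rightarrow> complex^'m^'m) \<Rightarrow> (real^'d \<Rightarrow> complex^'m^'m) \<Rightarrow> (int^'d \<Rightarrow> complex^'m^'m) \<Rightarrow> ereal" where
  "Jnu \<nu> \<Lambda> \<Sigma> \<Psi> Q = ereal (pairing \<Lambda> Q \<Sigma>) +
     ereal (real \<nu> / (real \<nu> - 1)) *
     enn2ereal (\<integral>\<^sup>+ \<theta>. ennreal (Jintegrand \<nu> \<Lambda> \<Psi> Q \<theta>) * indicator torus \<theta> \<partial>lborel)"

end

theory Submission
  imports Defs "HOL-Computational_Algebra.Polynomial"
begin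


lemma mat_tendstoI:
  fixes f :: "'b \<Rightarrow> 'a::topological_space^'n^'m"
  assumes "\<And>i j. ((\<lambda>x. f x $ i $ j) \<longlongrightarrow> A $ i $ j) F"
  shows "(f \<longlongrightarrow> A) F"
  by (intro vec_tendstoI assms)

lemma tendsto_mat_nth:
  fixes f :: "'b \<Rightarrow> 'a::topological_space^'n^'m"
  assumes "(f \<longlongrightarrow> A) F"
  shows "((\<lambda>x. f x $ i $ j) \<longlongrightarrow> A $ i $ j) F"
  by (intro tendsto_vec_nth assms)

lemma tendsto_mmult:
  fixes f g :: "'b \<Rightarrow> complex^'n^'n"
  assumes "(f \<longlongrightarrow> A) F" "(g \<longlongrightarrow> B) F"
  shows "((\<lambda>x. f x ** g x) \<longlongrightarrow> A ** B) F"
  unfolding matrix_matrix_mult_def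
  by (intro mat_tendstoI) (simp, intro tendsto_intros tendsto_mat_nth assms)

lemma tendsto_mpow:
  fixes f :: "'b \<Rightarrow> complex^'n^'n"
  assumes "(f \<longlongrightarrow> A) F"
  shows "((\<lambda>x. mpow (f x) k) \<longlongrightarrow> mpow A k) F"
  by (induction k) (auto intro!: tendsto_mmult assms)

lemma tendsto_det:
  fixes f :: "'b \<Rightarrow> complex^'n^'n"
  assumes "(f \<longlongrightarrow> A) F"
  shows "((\<lambda>x. det (f x)) \<longlongrightarrow> det A) F"
  unfolding det_def
  by (intro tendsto_intros tendsto_mat_nth assms)

lemma tendsto_trace:
  fixes f :: "'b \<Rightarrow> complex^'n^'n"
  assumes "(f \<longlongrightarrow> A) F"
  shows "((\<lambda>x. trace (f x)) \<longlongrightarrow> trace A) F"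
  unfolding trace_def
  by (intro tendsto_intros tendsto_mat_nth assms)

lemma tendsto_cscale:
  fixes f :: "'b \<Rightarrow> complex^'n^'m"
  assumes "(c \<longlongrightarrow> c0) F" "(f \<longlongrightarrow> A) F"
  shows "((\<lambda>x. cscale (c x) (f x)) \<longlongrightarrow> cscale c0 A) F"
  unfolding cscale_def
  by (intro mat_tendstoI) (simp, intro tendsto_intros tendsto_mat_nth assms)

lemma tendsto_cadj:
  fixes f :: "'b \<Rightarrow> complex^'n^'m"
  assumes "(f \<longlongrightarrow> A) F"
  shows "((\<lambda>x. cadj (f x)) \<longlongrightarrow> cadj A) F"
  unfolding cadj_def
  by (intro mat_tendstoI) (simp, intro tendsto_intros tendsto_mat_nth assms)

definition minv_formula :: "complex^'n^'n \<Rightarrow> complex^'n^'n" where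
  "minv_formula A = (\<chi> i j. det (\<chi> r c. if c = i then (if r = j then 1 else 0) else A $ r $ c) / det A)"

lemma matrix_inv_formula:
  fixes A :: "complex^'n^'n"
  assumes "det A \<noteq> 0"
  shows "matrix_inv A = minv_formula A"
proof -
  have inv: "invertible A" using assms invertible_det_nz by blast
  then have "A ** matrix_inv A = mat 1 \<and> matrix_inv A ** A = mat 1"
    unfolding invertible_def matrix_inv_def by (rule someI_ex)
  then have AB: "A ** matrix_inv A = mat 1" by blast
  show ?thesis
  proof (subst vec_eq_iff, intro allI, subst vec_eq_iff, intro allI)
    fix i j :: 'n
    define e where "e = (\<chi> r. if r = j then (1::complex) else 0)"
    have e: "e $ r = (if r = j then 1 else 0)" for r unfolding e_def by simp
    have "A *v (\<chi> k. matrix_inv A $ k $ j) = e"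
    proof (subst vec_eq_iff, intro allI)
      fix r
      have "(A ** matrix_inv A) $ r $ j = mat 1 $ r $ j" using AB by simp
      then show "(A *v (\<chi> k. matrix_inv A $ k $ j)) $ r = e $ r"
        by (simp add: matrix_matrix_mult_def matrix_vector_mult_def mat_def e)
    qed
    then have "(\<chi> k. matrix_inv A $ k $ j) = (\<chi> k. det(\<chi> r c. if c=k then e$r else A$r$c) / det A)"
      using cramer[OF assms] by blast
    then have "(\<chi> k. matrix_inv A $ k $ j) $ i = (\<chi> k. det(\<chi> r c. if c=k then e$r else A$r$c) / det A) $ i"
      by simp
    then have X: "matrix_inv A $ i $ j = det (\<chi> r c. if c = i then e $ r else A $ r $ c) / det A" by simp
    have Y: "(\<chi> r c. if c = i then e $ r else A $ r $ c) = (\<chi> r c. if c = i then (if r = j then 1 else 0) else A $ r $ c)"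
      by (simp add: e vec_eq_iff)
    show "matrix_inv A $ i $ j = minv_formula A $ i $ j"
      unfolding X Y minv_formula_def by simp
  qed
qed

lemma matrix_inv_singular:
  fixes A B :: "complex^'n^'n"
  assumes "det A = 0" "det B = 0"
  shows "matrix_inv A = matrix_inv B"
proof -
  have "\<not> invertible A" "\<not> invertible B" using assms invertible_det_nz by blast+
  then have "(\<lambda>A'. A ** A' = mat 1 \<and> A' ** A = mat 1) = (\<lambda>A'. B ** A' = mat 1 \<and> A' ** B = mat 1)"
    unfolding invertible_def by auto
  then show ?thesis unfolding matrix_inv_def by simp
qed

lemma matrix_inv_eq:
  fixes A :: "complex^'n^'n"
  shows "matrix_inv A = (if det A = 0 then matrix_inv (0::complex^'n^'n) else minv_formula A)"
proof -
  have "row i (0::complex^'n^'n) = 0" for i by (simp add: row_def vec_eq_iff)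
  then have "det (0::complex^'n^'n) = 0" using det_zero_row(2) by blast
  then show ?thesis using matrix_inv_formula matrix_inv_singular[of A 0] by auto
qed

lemma tendsto_minv_formula:
  fixes f :: "'b \<Rightarrow> complex^'n^'n"
  assumes "(f \<longlongrightarrow> A) F" "det A \<noteq> 0"
  shows "((\<lambda>x. minv_formula (f x)) \<longlongrightarrow> minv_formula A) F"
proof (rule mat_tendstoI)
  fix i j :: 'n
  have 1: "((\<lambda>x. det (\<chi> r c. if c = i then (if r = j then 1 else 0) else f x $ r $ c)) \<longlongrightarrow>
      det (\<chi> r c. if c = i then (if r = j then 1 else 0) else A $ r $ c)) F"
  proof (rule tendsto_det, rule mat_tendstoI)
    fix r c :: 'n
    show "((\<lambda>x. (\<chi> r c. if c = i then (if r = j then 1 else 0) else f x $ r $ c) $ r $ c) \<longlongrightarrow>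
       (\<chi> r c. if c = i then (if r = j then 1 else 0) else A $ r $ c) $ r $ c) F"
      by (cases "c = i") (simp_all add: tendsto_mat_nth[OF assms(1)])
  qed
  show "((\<lambda>x. minv_formula (f x) $ i $ j) \<longlongrightarrow> minv_formula A $ i $ j) F"
    unfolding minv_formula_def vec_lambda_beta
    by (rule tendsto_divide[OF 1 tendsto_det[OF assms(1)] assms(2)])
qed

lemma tendsto_matrix_inv:
  fixes f :: "'b \<Rightarrow> complex^'n^'n"
  assumes "(f \<longlongrightarrow> A) F" "det A \<noteq> 0"
  shows "((\<lambda>x. matrix_inv (f x)) \<longlongrightarrow> matrix_inv A) F"
proof -
  have ev: "\<forall>\<^sub>F x in F. det (f x) \<noteq> 0"
    by (rule tendsto_imp_eventually_ne[OF tendsto_det[OF assms(1)] assms(2)])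
  have ev2: "\<forall>\<^sub>F x in F. minv_formula (f x) = matrix_inv (f x)"
    using ev by eventually_elim (rule matrix_inv_formula[symmetric])
  have "((\<lambda>x. matrix_inv (f x)) \<longlongrightarrow> minv_formula A) F"
    by (rule Lim_transform_eventually[OF tendsto_minv_formula[OF assms] ev2])
  then show ?thesis by (simp only: matrix_inv_formula[OF assms(2)])
qed



definition adjF :: "complex^'n^'n \<Rightarrow> complex^'n^'n" where
  "adjF A = (\<chi> i j. det (\<chi> r c. if c = i then (if r = j then 1 else 0) else A $ r $ c))"

lemma minv_formula_adjF: "minv_formula A = cscale (1 / det A) (adjF A)"
  unfolding minv_formula_def adjF_def cscale_def by (simp add: vec_eq_iff)

lemma cont_det: "continuous_on UNIV (det :: complex^'n^'n \<Rightarrow> complex)"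
  unfolding continuous_on_def by (auto intro!: tendsto_det tendsto_ident_at)

lemma cont_trace: "continuous_on UNIV (trace :: complex^'n^'n \<Rightarrow> complex)"
  unfolding continuous_on_def by (auto intro!: tendsto_trace tendsto_ident_at)

lemma cont_adjF: "continuous_on UNIV (adjF :: complex^'n^'n \<Rightarrow> complex^'n^'n)"
  unfolding continuous_on_def adjF_def
  by (auto intro!: mat_tendstoI tendsto_det tendsto_ident_at tendsto_intros tendsto_mat_nth)

lemma cont_mmult: "continuous_on UNIV (\<lambda>p::(complex^'n^'n)\<times>(complex^'n^'n). fst p ** snd p)"
  unfolding continuous_on_def by (intro ballI tendsto_mmult tendsto_fst[OF tendsto_ident_at] tendsto_snd[OF tendsto_ident_at])

lemma cont_cscale: "continuous_on UNIV (\<lambda>p::complex\<times>(complex^'n^'n). cscale (fst p) (snd p))"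
  unfolding continuous_on_def by (intro ballI tendsto_cscale tendsto_fst[OF tendsto_ident_at] tendsto_snd[OF tendsto_ident_at])

lemma meas_det[measurable]: "f \<in> borel_measurable M \<Longrightarrow> (\<lambda>x. det (f x :: complex^'n^'n)) \<in> borel_measurable M"
  by (rule borel_measurable_continuous_on[OF cont_det])

lemma meas_trace[measurable]: "f \<in> borel_measurable M \<Longrightarrow> (\<lambda>x. trace (f x :: complex^'n^'n)) \<in> borel_measurable M"
  by (rule borel_measurable_continuous_on[OF cont_trace])

lemma meas_adjF: "f \<in> borel_measurable M \<Longrightarrow> (\<lambda>x. adjF (f x :: complex^'n^'n)) \<in> borel_measurable M"
  by (rule borel_measurable_continuous_on[OF cont_adjF])

lemma meas_mmult[measurable]: "f \<in> borel_measurable M \<Longrightarrow> g \<in> borel_measurable M \<Longrightarrow>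
   (\<lambda>x. (f x :: complex^'n^'n) ** (g x :: complex^'n^'n)) \<in> borel_measurable M"
  using borel_measurable_continuous_Pair[of f M g "\<lambda>(A::complex^'n^'n) (B::complex^'n^'n). A ** B"] cont_mmult by simp

lemma meas_cscale: "f \<in> borel_measurable M \<Longrightarrow> g \<in> borel_measurable M \<Longrightarrow>
   (\<lambda>x. cscale (f x) (g x :: complex^'n^'n)) \<in> borel_measurable M"
  by (rule borel_measurable_continuous_Pair[where H="\<lambda>A B. cscale A B", OF _ _ cont_cscale])

lemma meas_mpow[measurable]: "f \<in> borel_measurable M \<Longrightarrow> (\<lambda>x. mpow (f x :: complex^'n^'n) k) \<in> borel_measurable M"
  by (induction k) (auto intro: meas_mmult)

lemma meas_minv[measurable]:
  assumes f: "f \<in> borel_measurable M"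
  shows "(\<lambda>x. matrix_inv (f x :: complex^'n^'n)) \<in> borel_measurable M"
proof -
  have eq: "(\<lambda>x. matrix_inv (f x)) = (\<lambda>x. if det (f x) = 0 then matrix_inv (0::complex^'n^'n)
     else cscale (1 / det (f x)) (adjF (f x)))"
    by (rule ext, subst matrix_inv_eq, simp add: minv_formula_adjF)
  have "(\<lambda>x. cscale (1 / det (f x)) (adjF (f x))) \<in> borel_measurable M"
    by (intro meas_cscale meas_adjF f borel_measurable_divide borel_measurable_const meas_det)
  then show ?thesis unfolding eq using f by measurable
qed

definition Jform :: "real \<Rightarrow> nat \<Rightarrow> complex^'m^'m \<Rightarrow> complex^'m^'m \<Rightarrow> real" where
  "Jform c \<nu> A V = (let M = matrix_inv A + (1 / real \<nu>) *\<^sub>R V in if det M = 0 then 0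
      else c * Re (trace (mpow (matrix_inv A ** matrix_inv M) (\<nu> - 1))))"

lemma Jintegrand_eq: "Jintegrand \<nu> \<Lambda> \<Psi> Q \<theta> = Jform (1 / (2 * pi) ^ CARD('d)) \<nu> (\<Psi> \<theta>) (Qfun \<Lambda> Q \<theta>)"
  for \<Lambda> :: "(int^'d) set"
  unfolding Jintegrand_def Jform_def by simp

lemma meas_Jform:
  shows "f \<in> borel_measurable M \<Longrightarrow> g \<in> borel_measurable M \<Longrightarrow>
   (\<lambda>x. Jform c \<nu> (f x) (g x)) \<in> borel_measurable M"
proof -
  assume f: "f \<in> borel_measurable M" and g: "g \<in> borel_measurable M"
  define MM where "MM x = matrix_inv (f x) + (1 / real \<nu>) *\<^sub>R g x" for x
  have MM: "MM \<in> borel_measurable M"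
    unfolding MM_def by (intro borel_measurable_add borel_measurable_scaleR meas_minv borel_measurable_const f g)
  have T: "(\<lambda>x. c * Re (trace (mpow (matrix_inv (f x) ** matrix_inv (MM x)) (\<nu> - 1)))) \<in> borel_measurable M"
    by (intro borel_measurable_times borel_measurable_const measurable_compose[OF _ borel_measurable_Re]
        meas_trace meas_mpow meas_mmult meas_minv MM f)
  have S: "{x \<in> space M. det (MM x) = 0} \<in> sets M"
    using borel_measurable_vimage[OF meas_det[OF MM], of 0] by (simp add: vimage_def Int_def conj_commute)
  have "(\<lambda>x. if det (MM x) = 0 then 0 else c * Re (trace (mpow (matrix_inv (f x) ** matrix_inv (MM x)) (\<nu> - 1))))
      \<in> borel_measurable M"
    by (rule measurable_If[OF borel_measurable_const T S])
  then show ?thesis unfolding Jform_def Let_def MM_def .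
qed

lemma Jform_liminf:
  assumes "V \<longlonglongrightarrow> V0"
  shows "ennreal (Jform c \<nu> A V0) \<le> liminf (\<lambda>n. ennreal (Jform c \<nu> A (V n)))"
proof (cases "det (matrix_inv A + (1 / real \<nu>) *\<^sub>R V0) = 0")
  case True
  then show ?thesis by (simp add: Jform_def)
next
  case False
  let ?M = "\<lambda>n. matrix_inv A + (1 / real \<nu>) *\<^sub>R V n"
  have M: "?M \<longlonglongrightarrow> matrix_inv A + (1 / real \<nu>) *\<^sub>R V0"
    by (intro tendsto_intros assms)
  have ev: "\<forall>\<^sub>F n in sequentially. det (?M n) \<noteq> 0"
    by (rule tendsto_imp_eventually_ne[OF tendsto_det[OF M] False])
  have lim1: "(\<lambda>n. c * Re (trace (mpow (matrix_inv A ** matrix_inv (?M n)) (\<nu> - 1))))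
      \<longlonglongrightarrow> c * Re (trace (mpow (matrix_inv A ** matrix_inv (matrix_inv A + (1 / real \<nu>) *\<^sub>R V0)) (\<nu> - 1)))"
    by (intro tendsto_intros tendsto_trace tendsto_mpow tendsto_mmult tendsto_matrix_inv M False)
  have eq0: "Jform c \<nu> A V0 = c * Re (trace (mpow (matrix_inv A ** matrix_inv (matrix_inv A + (1 / real \<nu>) *\<^sub>R V0)) (\<nu> - 1)))"
    using False by (simp add: Jform_def)
  have ev2: "\<forall>\<^sub>F n in sequentially. c * Re (trace (mpow (matrix_inv A ** matrix_inv (?M n)) (\<nu> - 1))) = Jform c \<nu> A (V n)"
    using ev by eventually_elim (simp add: Jform_def)
  have "(\<lambda>n. Jform c \<nu> A (V n)) \<longlonglongrightarrow> Jform c \<nu> A V0"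
    unfolding eq0 by (rule Lim_transform_eventually[OF lim1 ev2])
  then have "(\<lambda>n. ennreal (Jform c \<nu> A (V n))) \<longlonglongrightarrow> ennreal (Jform c \<nu> A V0)"
    by (rule tendsto_ennrealI)
  then have "liminf (\<lambda>n. ennreal (Jform c \<nu> A (V n))) = ennreal (Jform c \<nu> A V0)"
    by (intro lim_imp_Liminf) auto
  then show ?thesis by simp
qed

lemma tendsto_Qfun:
  assumes "\<forall>k\<in>\<Lambda>. (\<lambda>n. Qs n k) \<longlonglongrightarrow> Q k"
  shows "(\<lambda>n. Qfun \<Lambda> (Qs n) \<theta>) \<longlonglongrightarrow> Qfun \<Lambda> Q \<theta>"
  unfolding Qfun_def
  by (intro tendsto_sum tendsto_cscale tendsto_const) (use assms in auto)

lemma tendsto_pairing: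
  assumes "\<forall>k\<in>\<Lambda>. (\<lambda>n. Qs n k) \<longlonglongrightarrow> Q k"
  shows "(\<lambda>n. pairing \<Lambda> (Qs n) \<Sigma>) \<longlonglongrightarrow> pairing \<Lambda> Q \<Sigma>"
  unfolding pairing_def
  by (intro tendsto_intros tendsto_sum tendsto_trace tendsto_mmult tendsto_const) (use assms in auto)

lemma cont_kdot: "continuous_on UNIV (kdot k)"
  unfolding kdot_def[abs_def] by (intro continuous_intros)

lemma cont_Qfun: "continuous_on UNIV (Qfun \<Lambda> Q)"
  unfolding continuous_on_def Qfun_def
  by (intro ballI tendsto_sum tendsto_cscale tendsto_const tendsto_intros
        continuous_on_tendsto_compose[OF cont_kdot tendsto_ident_at]) auto




lemma exists_sep_vector:
  fixes F :: "(int^'d) set"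
  assumes "finite F"
  shows "\<exists>v::int^'d. \<forall>k\<in>F. \<forall>k'\<in>F. k \<noteq> k' \<longrightarrow> (\<Sum>j\<in>UNIV. k$j * v$j) \<noteq> (\<Sum>j\<in>UNIV. k'$j * v$j)"
proof -
  have "countable (UNIV::'d set)" by (rule countable_finite) simp
  then obtain e :: "'d \<Rightarrow> nat" where e: "inj e" using countableE by blast
  define p :: "int^'d \<Rightarrow> int poly" where "p \<delta> = (\<Sum>j\<in>UNIV. monom (\<delta>$j) (e j))" for \<delta>
  have polyp: "poly (p \<delta>) x = (\<Sum>j\<in>UNIV. \<delta>$j * x ^ (e j))" for \<delta> x
    by (simp add: p_def poly_sum poly_monom)
  have pnz: "p \<delta> \<noteq> 0" if "\<delta> \<noteq> 0" for \<delta>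
  proof -
    have "\<exists>j. \<delta> $ j \<noteq> 0" using \<open>\<delta> \<noteq> 0\<close> by (simp add: vec_eq_iff)
    then obtain j0 where j0: "\<delta> $ j0 \<noteq> 0" by blast
    have "coeff (p \<delta>) (e j0) = (\<Sum>j\<in>UNIV. if e j = e j0 then \<delta>$j else 0)"
      by (simp add: p_def coeff_sum)
    also have "\<dots> = (\<Sum>j\<in>UNIV. if j = j0 then \<delta>$j else 0)"
      using e by (intro sum.cong) (auto simp: inj_eq)
    also have "\<dots> = \<delta> $ j0" by simp
    finally show ?thesis using j0 by auto
  qed
  define D where "D = (\<lambda>(k,k'). k - k') ` {(k,k'). k\<in>F \<and> k'\<in>F \<and> k\<noteq>k'}"
  have sub: "{(k,k'). k\<in>F \<and> k'\<in>F \<and> k\<noteq>k'} \<subseteq> F \<times> F" by blast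
  have finD: "finite D" unfolding D_def
    by (rule finite_imageI, rule finite_subset[OF sub finite_cartesian_product[OF assms assms]])
  have D0: "0 \<notin> D" unfolding D_def by auto
  define R where "R = (\<Prod>\<delta>\<in>D. p \<delta>)"
  have "\<forall>\<delta>\<in>D. p \<delta> \<noteq> 0" using D0 pnz by metis
  then have "R \<noteq> 0" unfolding R_def by (simp add: prod_zero_iff[OF finD])
  then have "finite {x. poly R x = 0}" by (rule poly_roots_finite)
  then obtain N :: int where N: "N \<notin> {x. poly R x = 0}"
    using ex_new_if_finite[OF infinite_UNIV_int] by blast
  then have NP: "poly (p \<delta>) N \<noteq> 0" if "\<delta> \<in> D" for \<delta>
    using that N unfolding R_def by (auto simp: poly_prod prod_zero_iff[OF finD])
  define v :: "int^'d" where "v = (\<chi> j. N ^ (e j))"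
  show ?thesis
  proof (intro exI ballI impI)
    fix k k' assume kk: "k \<in> F" "k' \<in> F" "k \<noteq> k'"
    then have "k - k' \<in> D" unfolding D_def by auto
    then have "poly (p (k - k')) N \<noteq> 0" by (rule NP)
    then have "(\<Sum>j\<in>UNIV. k$j * v$j) - (\<Sum>j\<in>UNIV. k'$j * v$j) \<noteq> 0"
      by (simp add: polyp v_def sum_subtractf[symmetric] left_diff_distrib)
    then show "(\<Sum>j\<in>UNIV. k$j * v$j) \<noteq> (\<Sum>j\<in>UNIV. k'$j * v$j)" by simp
  qed
qed

lemma countable_exp_eq: "countable {t::real. exp (\<i> * complex_of_real t) = z}"
proof (cases "\<exists>t0. exp (\<i> * complex_of_real t0) = z")
  case False then show ?thesis by simp
next
  case True
  then obtain t0 where t0: "exp (\<i> * complex_of_real t0) = z" by blast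
  have "{t::real. exp (\<i> * complex_of_real t) = z} \<subseteq> range (\<lambda>n::int. t0 + 2 * pi * of_int n)"
  proof
    fix t assume "t \<in> {t::real. exp (\<i> * complex_of_real t) = z}"
    then have "exp (\<i> * complex_of_real t) = exp (\<i> * complex_of_real t0)" using t0 by simp
    then obtain n :: int where "\<i> * complex_of_real t = \<i> * complex_of_real t0 + (of_int (2 * n) * pi) * \<i>"
      using exp_eq by blast
    then have "\<i> * complex_of_real t = \<i> * complex_of_real (t0 + 2 * pi * of_int n)"
      by (simp add: algebra_simps)
    then have "complex_of_real t = complex_of_real (t0 + 2 * pi * of_int n)"
      by simp
    then have "t = t0 + 2 * pi * of_int n" by (simp only: of_real_eq_iff)
    then show "t \<in> range (\<lambda>n::int. t0 + 2 * pi * of_int n)" by blast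
  qed
  then show ?thesis by (rule countable_subset) simp
qed

lemma line_zeros_countable:
  fixes c :: "int^'d \<Rightarrow> complex" and F :: "(int^'d) set" and v :: "int^'d" and \<phi> :: "real^'d"
  assumes F: "finite F"
    and sep: "\<forall>k\<in>F. \<forall>k'\<in>F. k \<noteq> k' \<longrightarrow> (\<Sum>j\<in>UNIV. k$j * v$j) \<noteq> (\<Sum>j\<in>UNIV. k'$j * v$j)"
    and k0: "k0 \<in> F" "c k0 \<noteq> 0"
  shows "countable {t::real. (\<Sum>k\<in>F. c k * exp (\<i> * complex_of_real (kdot k (\<phi> + t *\<^sub>R (\<chi> j. real_of_int (v$j)))))) = 0}"
proof -
  define n where "n k = (\<Sum>j\<in>UNIV. k$j * v$j)" for k :: "int^'d"
  define N where "N = (\<Sum>k\<in>F. \<bar>n k\<bar>)"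
  define m where "m k = nat (n k + N)" for k
  define a where "a k = c k * exp (\<i> * complex_of_real (kdot k \<phi>))" for k
  define P where "P = (\<Sum>k\<in>F. monom (a k) (m k))"
  have nN: "\<bar>n k\<bar> \<le> N" if "k \<in> F" for k
    unfolding N_def using F that by (intro member_le_sum) auto
  have mk: "int (m k) = n k + N" if "k \<in> F" for k
  proof -
    have "0 \<le> n k + N" using nN[OF that] by linarith
    then show ?thesis unfolding m_def by (rule nat_0_le)
  qed
  have minj: "m k = m k' \<longleftrightarrow> k = k'" if "k \<in> F" "k' \<in> F" for k k'
  proof
    assume "m k = m k'"
    then have "int (m k) = int (m k')" by simp
    then have "n k = n k'" using mk[OF that(1)] mk[OF that(2)] by linarith
    then show "k = k'" using sep that unfolding n_def by blast
  qed simp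
  have kd: "kdot k (\<phi> + t *\<^sub>R (\<chi> j. real_of_int (v$j))) = kdot k \<phi> + t * of_int (n k)" for k t
    unfolding kdot_def n_def
    by (simp add: algebra_simps sum.distrib sum_distrib_left)
  have trm: "exp (\<i> * complex_of_real (t * of_int (n k))) =
      exp (- \<i> * complex_of_real t * of_int N) * exp (\<i> * complex_of_real t) ^ m k" if "k \<in> F" for k t
  proof -
    have e0: "exp (\<i> * complex_of_real t) ^ m k = exp (of_nat (m k) * (\<i> * complex_of_real t))"
      by (simp add: exp_of_nat_mult)
    have e00: "(of_nat (m k) :: complex) = of_int (n k + N)"
      using mk[OF that] by (metis of_int_of_nat_eq)
    have e2: "exp (- \<i> * complex_of_real t * of_int N) * exp (of_int (n k + N) * (\<i> * complex_of_real t))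
        = exp (- \<i> * complex_of_real t * of_int N + of_int (n k + N) * (\<i> * complex_of_real t))"
      by (rule exp_add[symmetric])
    have e3: "- \<i> * complex_of_real t * of_int N + of_int (n k + N) * (\<i> * complex_of_real t)
        = \<i> * complex_of_real (t * of_int (n k))"
      by (simp add: algebra_simps)
    show ?thesis unfolding e0 e00 e2 e3 ..
  qed
  have g: "(\<Sum>k\<in>F. c k * exp (\<i> * complex_of_real (kdot k (\<phi> + t *\<^sub>R (\<chi> j. real_of_int (v$j))))))
      = exp (- \<i> * complex_of_real t * of_int N) * poly P (exp (\<i> * complex_of_real t))" for t
  proof -
    have "(\<Sum>k\<in>F. c k * exp (\<i> * complex_of_real (kdot k (\<phi> + t *\<^sub>R (\<chi> j. real_of_int (v$j))))))
       = (\<Sum>k\<in>F. a k * exp (\<i> * complex_of_real (t * of_int (n k))))"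
      unfolding kd a_def by (intro sum.cong refl) (simp add: distrib_left exp_add)
    also have "\<dots> = (\<Sum>k\<in>F. exp (- \<i> * complex_of_real t * of_int N) * (a k * exp (\<i> * complex_of_real t) ^ m k))"
      by (intro sum.cong refl, subst trm) (simp_all add: mult_ac)
    also have "\<dots> = exp (- \<i> * complex_of_real t * of_int N) * poly P (exp (\<i> * complex_of_real t))"
      by (simp add: P_def poly_sum poly_monom sum_distrib_left)
    finally show ?thesis .
  qed
  have "coeff P (m k0) = (\<Sum>k\<in>F. if m k = m k0 then a k else 0)"
    by (simp add: P_def coeff_sum)
  also have "\<dots> = (\<Sum>k\<in>F. if k = k0 then a k else 0)"
    using minj k0 by (intro sum.cong) auto
  also have "\<dots> = a k0" using F k0 by simp
  finally have "coeff P (m k0) \<noteq> 0" using k0 by (simp add: a_def)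
  then have "P \<noteq> 0" by auto
  then have fin: "finite {z. poly P z = 0}" by (rule poly_roots_finite)
  have "{t::real. (\<Sum>k\<in>F. c k * exp (\<i> * complex_of_real (kdot k (\<phi> + t *\<^sub>R (\<chi> j. real_of_int (v$j)))))) = 0}
      \<subseteq> (\<Union>z\<in>{z. poly P z = 0}. {t::real. exp (\<i> * complex_of_real t) = z})"
    unfolding g by auto
  moreover have "countable (\<Union>z\<in>{z. poly P z = 0}. {t::real. exp (\<i> * complex_of_real t) = z})"
    using fin by (intro countable_UN countable_finite countable_exp_eq) auto
  ultimately show ?thesis by (rule countable_subset)
qed

lemma null_by_lines:
  fixes Z :: "(real^'d) set" and w :: "real^'d"
  assumes Zc: "closed Z" and lines: "\<And>\<phi>. {t::real. \<phi> + t *\<^sub>R w \<in> Z} \<in> null_sets lborel"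
  shows "Z \<in> null_sets lborel"
proof -
  have Zb[measurable]: "Z \<in> sets borel" using Zc by (rule borel_closed)
  have meas: "(\<lambda>(\<phi>::real^'d, t::real). indicator Z (t *\<^sub>R w + \<phi>) * indicator {0..1} t :: ennreal)
      \<in> borel_measurable (lborel \<Otimes>\<^sub>M lborel)"
    by measurable
  have tr: "emeasure lborel Z = (\<integral>\<^sup>+ \<phi>. indicator Z (t *\<^sub>R w + \<phi>) \<partial>lborel)" for t
  proof -
    have "emeasure lborel Z = (\<integral>\<^sup>+ \<phi>. indicator Z \<phi> \<partial>lborel)" by simp
    also have "\<dots> = (\<integral>\<^sup>+ \<phi>. indicator Z \<phi> \<partial>(distr lborel borel ((+) (t *\<^sub>R w))))"
      by (simp add: lborel_distr_plus)
    also have "\<dots> = (\<integral>\<^sup>+ \<phi>. indicator Z (t *\<^sub>R w + \<phi>) \<partial>lborel)"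
      by (subst nn_integral_distr) auto
    finally show ?thesis .
  qed
  have inner0: "(\<integral>\<^sup>+ t. indicator Z (t *\<^sub>R w + \<phi>) * indicator {0..1::real} t \<partial>lborel) = 0" for \<phi>
  proof -
    have "(\<integral>\<^sup>+ t. indicator Z (t *\<^sub>R w + \<phi>) * indicator {0..1::real} t \<partial>lborel)
        \<le> (\<integral>\<^sup>+ t. indicator {t::real. \<phi> + t *\<^sub>R w \<in> Z} t \<partial>lborel)"
      by (intro nn_integral_mono) (auto simp: indicator_def add.commute)
    also have "\<dots> = emeasure lborel {t::real. \<phi> + t *\<^sub>R w \<in> Z}"
      using lines[of \<phi>] by (intro nn_integral_indicator) auto
    also have "\<dots> = 0" using lines[of \<phi>] by auto
    finally show ?thesis by simp
  qed
  have "emeasure lborel Z = (\<integral>\<^sup>+ t. emeasure lborel Z * indicator {0..1::real} t \<partial>lborel)"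
    by (subst nn_integral_cmult_indicator) auto
  also have "\<dots> = (\<integral>\<^sup>+ t. (\<integral>\<^sup>+ \<phi>. indicator Z (t *\<^sub>R w + \<phi>) * indicator {0..1::real} t \<partial>lborel) \<partial>lborel)"
    by (intro nn_integral_cong) (subst nn_integral_multc, measurable, simp add: tr[symmetric])
  also have "\<dots> = (\<integral>\<^sup>+ \<phi>. (\<integral>\<^sup>+ t. indicator Z (t *\<^sub>R w + \<phi>) * indicator {0..1::real} t \<partial>lborel) \<partial>lborel)"
    using lborel_pair.Fubini'[OF meas] by simp
  also have "\<dots> = (\<integral>\<^sup>+ (\<phi>::real^'d). 0 \<partial>lborel)"
    by (simp only: inner0)
  finally have "emeasure lborel Z = 0" by simp
  then show ?thesis using Zb by auto
qed



lemma trig_poly_repr: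
  assumes "trig_poly p"
  obtains F c where "finite F" "p = (\<lambda>\<theta>. \<Sum>k\<in>F. c k * exp (\<i> * complex_of_real (kdot k \<theta>)))"
  using assms unfolding trig_poly_def by fastforce

lemma trig_poly_cont: "trig_poly p \<Longrightarrow> continuous_on UNIV p"
  by (erule trig_poly_repr) (auto intro!: continuous_intros continuous_on_compose2[OF cont_kdot])

lemma trig_poly_zeros_null:
  fixes q :: "real^'d \<Rightarrow> complex"
  assumes tp: "trig_poly q" and nz: "q \<theta>0 \<noteq> 0"
  shows "{\<theta>. q \<theta> = 0} \<in> null_sets lborel"
proof -
  obtain F c where F: "finite F" and qeq: "q = (\<lambda>\<theta>. \<Sum>k\<in>F. c k * exp (\<i> * complex_of_real (kdot k \<theta>)))"
    using tp by (rule trig_poly_repr)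
  obtain k0 where k0: "k0 \<in> F" "c k0 \<noteq> 0"
    using nz unfolding qeq by (metis (no_types, lifting) mult_eq_0_iff sum.neutral)
  obtain v :: "int^'d" where sep: "\<forall>k\<in>F. \<forall>k'\<in>F. k \<noteq> k' \<longrightarrow> (\<Sum>j\<in>UNIV. k$j * v$j) \<noteq> (\<Sum>j\<in>UNIV. k'$j * v$j)"
    using exists_sep_vector[OF F] by blast
  show ?thesis
  proof (rule null_by_lines[where w = "\<chi> j. real_of_int (v$j)"])
    show "closed {\<theta>. q \<theta> = 0}"
      by (rule closed_Collect_eq[OF trig_poly_cont[OF tp] continuous_on_const])
    fix \<phi> :: "real^'d"
    have "countable {t::real. q (\<phi> + t *\<^sub>R (\<chi> j. real_of_int (v$j))) = 0}"
      unfolding qeq using line_zeros_countable[where c=c and F=F and v=v and \<phi>=\<phi>, OF F sep k0] by simp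
    then show "{t::real. \<phi> + t *\<^sub>R (\<chi> j. real_of_int (v$j)) \<in> {\<theta>. q \<theta> = 0}} \<in> null_sets lborel"
      by (simp add: countable_imp_null_set_lborel)
  qed
qed

lemma meas_vec:
  fixes f :: "'a \<Rightarrow> 'b::euclidean_space^'n"
  assumes "\<And>i. (\<lambda>x. f x $ i) \<in> borel_measurable M"
  shows "f \<in> borel_measurable M"
proof (subst borel_measurable_euclidean_space, intro ballI)
  fix b :: "'b^'n" assume "b \<in> Basis"
  then obtain i u where "u \<in> Basis" "b = axis i u" unfolding Basis_vec_def by auto
  then show "(\<lambda>x. f x \<bullet> b) \<in> borel_measurable M"
    using assms[of i] by (simp add: inner_axis)
qed

lemma meas_torus[measurable]: "(torus :: (real^'d) set) \<in> sets borel"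
proof -
  have eq: "torus = (\<Inter>j. {\<theta>::real^'d. - pi < \<theta> $ j}) \<inter> (\<Inter>j. {\<theta>. \<theta> $ j \<le> pi})"
    unfolding torus_def by auto
  have "open (\<Inter>j. {\<theta>::real^'d. - pi < \<theta> $ j})"
    by (intro open_INT finite allI ballI open_Collect_less continuous_intros)
  moreover have "closed (\<Inter>j. {\<theta>::real^'d. \<theta> $ j \<le> pi})"
    by (intro closed_INT ballI closed_Collect_le continuous_intros)
  ultimately show ?thesis unfolding eq by (intro sets.Int borel_open borel_closed)
qed



theorem lemma5p5:
  fixes \<nu> :: nat
    and \<Lambda> :: "(int^'d) set"
    and \<Sigma> :: "int^'d \<Rightarrow> complex^'m^'m"
    and \<Psi> :: "real^'d \<Rightarrow> complex^'m^'m"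
  assumes "\<nu> \<ge> 2"
    and "finite \<Lambda>" and "0 \<in> \<Lambda>" and "\<forall>k\<in>\<Lambda>. - k \<in> \<Lambda>"
    and "\<forall>k\<in>\<Lambda>. \<Sigma> (- k) = cadj (\<Sigma> k)"
    and "rational_matrix_fun \<Psi>"
    and "bounded_coercive \<Psi>"
  shows "\<forall>Q\<in>Lplus \<nu> \<Lambda> \<Psi>. \<forall>Qs::nat \<Rightarrow> int^'d \<Rightarrow> complex^'m^'m.
           (\<forall>n. Qs n \<in> Lplus \<nu> \<Lambda> \<Psi>) \<longrightarrow> (\<forall>k\<in>\<Lambda>. (\<lambda>n. Qs n k) \<longlonglongrightarrow> Q k) \<longrightarrow>
           Jnu \<nu> \<Lambda> \<Sigma> \<Psi> Q \<le> liminf (\<lambda>n. Jnu \<nu> \<Lambda> \<Sigma> \<Psi> (Qs n))"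
proof (intro ballI allI impI)
  fix Q and Qs :: "nat \<Rightarrow> int^'d \<Rightarrow> complex^'m^'m"
  assume conv: "\<forall>k\<in>\<Lambda>. (\<lambda>n. Qs n k) \<longlonglongrightarrow> Q k"
  have "\<forall>ij::'m\<times>'m. \<exists>pq. trig_poly (fst pq) \<and> trig_poly (snd pq) \<and> (\<exists>\<theta>\<in>torus. snd pq \<theta> \<noteq> 0) \<and>
      (\<forall>\<theta>\<in>torus. snd pq \<theta> \<noteq> 0 \<longrightarrow> \<Psi> \<theta> $ fst ij $ snd ij = fst pq \<theta> / snd pq \<theta>)"
    using assms(6) unfolding rational_matrix_fun_def rational_on_torus_def by fastforce
  then obtain PQ where PQ: "\<And>ij::'m\<times>'m. trig_poly (fst (PQ ij)) \<and> trig_poly (snd (PQ ij)) \<and> (\<exists>\<theta>\<in>torus. snd (PQ ij) \<theta> \<noteq> 0) \<and>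
      (\<forall>\<theta>\<in>torus. snd (PQ ij) \<theta> \<noteq> 0 \<longrightarrow> \<Psi> \<theta> $ fst ij $ snd ij = fst (PQ ij) \<theta> / snd (PQ ij) \<theta>)"
    by metis
  define pp where "pp i j = fst (PQ (i, j))" for i j
  define qq where "qq i j = snd (PQ (i, j))" for i j
  have pq: "trig_poly (pp i j)" "trig_poly (qq i j)" "\<exists>\<theta>\<in>torus. qq i j \<theta> \<noteq> 0"
     "\<And>\<theta>. \<theta> \<in> torus \<Longrightarrow> qq i j \<theta> \<noteq> 0 \<Longrightarrow> \<Psi> \<theta> $ i $ j = pp i j \<theta> / qq i j \<theta>" for i j
    using PQ[of "(i, j)"] unfolding pp_def qq_def by auto
  define Zs where "Zs = (\<Union>ij::'m\<times>'m. {\<theta>. qq (fst ij) (snd ij) \<theta> = 0})"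
  have Zs_null: "Zs \<in> null_sets lborel"
    unfolding Zs_def
  proof (rule null_sets_UN)
    fix ij :: "'m\<times>'m"
    obtain \<theta>0 where "qq (fst ij) (snd ij) \<theta>0 \<noteq> 0" using pq(3) by blast
    then show "{\<theta>. qq (fst ij) (snd ij) \<theta> = 0} \<in> null_sets lborel"
      using trig_poly_zeros_null[OF pq(2)] by blast
  qed
  define Pm where "Pm \<theta> = (\<chi> i j. pp i j \<theta> / qq i j \<theta>)" for \<theta>
  have Pm_meas: "Pm \<in> borel_measurable lborel"
  proof (rule meas_vec)
    fix i
    show "(\<lambda>\<theta>. Pm \<theta> $ i) \<in> borel_measurable lborel"
    proof (rule meas_vec)
      fix j
      have "pp i j \<in> borel_measurable borel" "qq i j \<in> borel_measurable borel"
        by (rule borel_measurable_continuous_onI[OF trig_poly_cont[OF pq(1)]],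
            rule borel_measurable_continuous_onI[OF trig_poly_cont[OF pq(2)]])
      then have "(\<lambda>\<theta>. pp i j \<theta> / qq i j \<theta>) \<in> borel_measurable lborel"
        by (intro borel_measurable_divide) simp_all
      then show "(\<lambda>\<theta>. Pm \<theta> $ i $ j) \<in> borel_measurable lborel"
        unfolding Pm_def by simp
    qed
  qed
  have Psi_Pm: "\<Psi> \<theta> = Pm \<theta>" if "\<theta> \<in> torus" "\<theta> \<notin> Zs" for \<theta>
    using that pq(4) unfolding Zs_def Pm_def by (auto simp: vec_eq_iff)
  define cc :: real where "cc = 1 / (2 * pi) ^ CARD('d)"
  define g where "g Q' \<theta> = ennreal (Jform cc \<nu> (Pm \<theta>) (Qfun \<Lambda> Q' \<theta>)) * indicator torus \<theta>" for Q' \<theta>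
  have fg: "(\<integral>\<^sup>+ \<theta>. ennreal (Jintegrand \<nu> \<Lambda> \<Psi> Q' \<theta>) * indicator torus \<theta> \<partial>lborel) = integral\<^sup>N lborel (g Q')" for Q'
  proof (rule nn_integral_cong_AE)
    have "AE \<theta> in lborel. \<theta> \<notin> Zs" using Zs_null by (rule AE_not_in)
    then show "AE \<theta> in lborel. ennreal (Jintegrand \<nu> \<Lambda> \<Psi> Q' \<theta>) * indicator torus \<theta> = g Q' \<theta>"
      by eventually_elim (auto simp: g_def Jintegrand_eq cc_def Psi_Pm indicator_def)
  qed
  have g_meas: "g Q' \<in> borel_measurable lborel" for Q'
  proof -
    have QM: "Qfun \<Lambda> Q' \<in> borel_measurable lborel"
      using borel_measurable_continuous_onI[OF cont_Qfun] by simp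
    have TM: "torus \<in> sets lborel" using meas_torus by simp
    show ?thesis unfolding g_def
      by (intro borel_measurable_times_ennreal measurable_compose[OF _ measurable_ennreal] meas_Jform Pm_meas
          QM borel_measurable_indicator TM)
  qed
  have pw: "g Q \<theta> \<le> liminf (\<lambda>n. g (Qs n) \<theta>)" for \<theta>
  proof (cases "\<theta> \<in> torus")
    case True
    then show ?thesis unfolding g_def using Jform_liminf[OF tendsto_Qfun[OF conv]] by simp
  next
    case False
    then show ?thesis unfolding g_def by simp
  qed
  have Ile: "integral\<^sup>N lborel (g Q) \<le> liminf (\<lambda>n. integral\<^sup>N lborel (g (Qs n)))"
  proof -
    have "integral\<^sup>N lborel (g Q) \<le> (\<integral>\<^sup>+ \<theta>. liminf (\<lambda>n. g (Qs n) \<theta>) \<partial>lborel)"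
      by (intro nn_integral_mono pw)
    also have "\<dots> \<le> liminf (\<lambda>n. integral\<^sup>N lborel (g (Qs n)))"
      by (intro nn_integral_liminf g_meas)
    finally show ?thesis .
  qed
  define I where "I n = integral\<^sup>N lborel (g (Qs n))" for n
  define \<kappa> :: real where "\<kappa> = real \<nu> / (real \<nu> - 1)"
  have \<kappa>: "\<kappa> \<ge> 0" unfolding \<kappa>_def using assms(1) by simp
  have JQ: "Jnu \<nu> \<Lambda> \<Sigma> \<Psi> Q = ereal (pairing \<Lambda> Q \<Sigma>) + ereal \<kappa> * enn2ereal (integral\<^sup>N lborel (g Q))"
    unfolding Jnu_def \<kappa>_def fg ..
  have JQs: "Jnu \<nu> \<Lambda> \<Sigma> \<Psi> (Qs n) = ereal (pairing \<Lambda> (Qs n) \<Sigma>) + ereal \<kappa> * enn2ereal (I n)" for n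
    unfolding Jnu_def \<kappa>_def fg I_def ..
  have "liminf (\<lambda>n. Jnu \<nu> \<Lambda> \<Sigma> \<Psi> (Qs n)) = ereal (pairing \<Lambda> Q \<Sigma>) + liminf (\<lambda>n. ereal \<kappa> * enn2ereal (I n))"
    unfolding JQs
    by (rule ereal_liminf_lim_add) (auto intro: tendsto_pairing[OF conv])
  also have "liminf (\<lambda>n. ereal \<kappa> * enn2ereal (I n)) = ereal \<kappa> * liminf (\<lambda>n. enn2ereal (I n))"
    by (rule Liminf_ereal_mult_left) (auto simp: \<kappa>)
  also have "liminf (\<lambda>n. enn2ereal (I n)) = enn2ereal (liminf I)"
    by (rule Liminf_compose_continuous_mono) (auto simp: continuous_on_enn2ereal mono_def less_eq_ennreal.rep_eq)
  finally have eq: "liminf (\<lambda>n. Jnu \<nu> \<Lambda> \<Sigma> \<Psi> (Qs n)) = ereal (pairing \<Lambda> Q \<Sigma>) + ereal \<kappa> * enn2ereal (liminf I)" .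
  have "enn2ereal (integral\<^sup>N lborel (g Q)) \<le> enn2ereal (liminf I)"
    using Ile unfolding I_def by (simp add: less_eq_ennreal.rep_eq)
  then have "ereal \<kappa> * enn2ereal (integral\<^sup>N lborel (g Q)) \<le> ereal \<kappa> * enn2ereal (liminf I)"
    by (intro ereal_mult_left_mono) (auto simp: \<kappa>)
  then show "Jnu \<nu> \<Lambda> \<Sigma> \<Psi> Q \<le> liminf (\<lambda>n. Jnu \<nu> \<Lambda> \<Sigma> \<Psi> (Qs n))"
    unfolding JQ eq by (rule add_left_mono)
qed

end
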